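(* For all $n\ge 0$, $|F_n(321,2143,4123)|=\binom{n}{2}+1$.
   Context: A permutation $\pi$ avoids a classical pattern $p\in S_k$ if no subsequence of $\pi$ of length $k$ is order-isomorphic to $p$. A Fishburn permutation is a permutation $\pi=\pi_1\cdots\pi_n$ of $[n]$ for which there are no indices $i<j$ with $\pi_j<\pi_i<\pi_{i+1}$ and $\pi_i=\pi_j+1$. $F_n(\sigma_1,\dots,\sigma_k)$ denotes the set of Fishburn permutations of length $n$ avoiding each of the classical patterns $\sigma_1,\dots,\sigma_k$ (with $F_0$ containing only the empty permutation). *)

theory Defs
  imports Main
begin

text \<open>Permutations of [n] = {1..n} in one-line notation, as lists
  (position i, 0-based, holds the value pi_(i+1)).\<close>

definition perms_of :: "nat \<Rightarrow> nat list set" where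
  "perms_of n = {xs. distinct xs \<and> set xs = {1..n}}"

definition contains :: "nat list \<Rightarrow> nat list \<Rightarrow> bool" where
  "contains w p \<longleftrightarrow>
     (\<exists>f :: nat \<Rightarrow> nat. strict_mono_on {..<length p} f \<and>
        (\<forall>j<length p. f j < length w) \<and>
        (\<forall>a<length p. \<forall>b<length p. (w ! f a < w ! f b) \<longleftrightarrow> (p ! a < p ! b)))"

definition avoids :: "nat list \<Rightarrow> nat list \<Rightarrow> bool" where
  "avoids w p \<longleftrightarrow> \<not> contains w p"

definition fishburn :: "nat list \<Rightarrow> bool" where
  "fishburn w \<longleftrightarrow>
     \<not> (\<exists>i j. i < j \<and> j < length w \<and> Suc i < length w \<and>
            w ! j < w ! i \<and> w ! i < w ! Suc i \<and> w ! i = w ! j + 1)"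

definition F :: "nat \<Rightarrow> nat list list \<Rightarrow> nat list set" where
  "F n ps = {w \<in> perms_of n. fishburn w \<and> (\<forall>p\<in>set ps. avoids w p)}"

end

theory Submission
  imports Defs
begin


lemma all3: "(\<forall>a<(3::nat). P a) \<longleftrightarrow> P 0 \<and> P 1 \<and> P 2"
  by (auto simp: eval_nat_numeral less_Suc_eq)
lemma all4: "(\<forall>a<(4::nat). P a) \<longleftrightarrow> P 0 \<and> P 1 \<and> P 2 \<and> P 3"
  by (auto simp: numeral_3_eq_3 eval_nat_numeral less_Suc_eq)

lemma c321: "contains w [3,2,1] \<longleftrightarrow>
  (\<exists>i j k. i<j \<and> j<k \<and> k<length w \<and> w!j < w!i \<and> w!k < w!j)"
proof
  assume "contains w [3,2,1]"
  then obtain f where sm: "strict_mono_on {..<length [3,2,1::nat]} f" and lt: "\<forall>j<length [3,2,1::nat]. f j < length w"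
    and iso: "\<forall>a<length [3,2,1::nat]. \<forall>b<length [3,2,1::nat]. (w!f a < w!f b) \<longleftrightarrow> ([3,2,1::nat]!a < [3,2,1]!b)"
    unfolding contains_def by blast
  have "f 0 < f 1" "f 1 < f 2" using sm by (auto simp: strict_mono_on_def)
  moreover have "f 2 < length w" using lt by auto
  moreover have "w!f 1 < w!f 0" "w!f 2 < w!f 1" using iso by (auto simp: all3)
  ultimately show "\<exists>i j k. i<j \<and> j<k \<and> k<length w \<and> w!j < w!i \<and> w!k < w!j" by blast
next
  assume "\<exists>i j k. i<j \<and> j<k \<and> k<length w \<and> w!j < w!i \<and> w!k < w!j"
  then obtain i j k where h: "i<j" "j<k" "k<length w" "w!j < w!i" "w!k < w!j" by blast
  show "contains w [3,2,1]" unfolding contains_def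
    apply (rule exI[of _ "(!) [i,j,k]"])
    using h by (auto simp: strict_mono_on_def less_Suc_eq)
qed

lemma c2143: "contains w [2,1,4,3] \<longleftrightarrow>
  (\<exists>i j k l. i<j \<and> j<k \<and> k<l \<and> l<length w \<and> w!j < w!i \<and> w!i < w!l \<and> w!l < w!k)"
proof
  assume "contains w [2,1,4,3]"
  then obtain f where sm: "strict_mono_on {..<length [2,1,4,3::nat]} f" and lt: "\<forall>j<length [2,1,4,3::nat]. f j < length w"
    and iso: "\<forall>a<length [2,1,4,3::nat]. \<forall>b<length [2,1,4,3::nat]. (w!f a < w!f b) \<longleftrightarrow> ([2,1,4,3::nat]!a < [2,1,4,3]!b)"
    unfolding contains_def by blast
  have "f 0 < f 1" "f 1 < f 2" "f 2 < f 3" using sm by (auto simp: strict_mono_on_def)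
  moreover have "f 3 < length w" using lt by auto
  moreover have "w!f 1 < w!f 0" "w!f 0 < w!f 3" "w!f 3 < w!f 2" using iso by (auto simp: all4)
  ultimately show "\<exists>i j k l. i<j \<and> j<k \<and> k<l \<and> l<length w \<and> w!j < w!i \<and> w!i < w!l \<and> w!l < w!k" by blast
next
  assume "\<exists>i j k l. i<j \<and> j<k \<and> k<l \<and> l<length w \<and> w!j < w!i \<and> w!i < w!l \<and> w!l < w!k"
  then obtain i j k l where h: "i<j" "j<k" "k<l" "l<length w" "w!j < w!i" "w!i < w!l" "w!l < w!k" by blast
  show "contains w [2,1,4,3]" unfolding contains_def
    apply (rule exI[of _ "(!) [i,j,k,l]"])
    using h by (auto simp: strict_mono_on_def less_Suc_eq)
qed

lemma c4123: "contains w [4,1,2,3] \<longleftrightarrow>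
  (\<exists>i j k l. i<j \<and> j<k \<and> k<l \<and> l<length w \<and> w!j < w!k \<and> w!k < w!l \<and> w!l < w!i)"
proof
  assume "contains w [4,1,2,3]"
  then obtain f where sm: "strict_mono_on {..<length [4,1,2,3::nat]} f" and lt: "\<forall>j<length [4,1,2,3::nat]. f j < length w"
    and iso: "\<forall>a<length [4,1,2,3::nat]. \<forall>b<length [4,1,2,3::nat]. (w!f a < w!f b) \<longleftrightarrow> ([4,1,2,3::nat]!a < [4,1,2,3]!b)"
    unfolding contains_def by blast
  have "f 0 < f 1" "f 1 < f 2" "f 2 < f 3" using sm by (auto simp: strict_mono_on_def)
  moreover have "f 3 < length w" using lt by auto
  moreover have "w!f 1 < w!f 2" "w!f 2 < w!f 3" "w!f 3 < w!f 0" using iso by (auto simp: all4)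
  ultimately show "\<exists>i j k l. i<j \<and> j<k \<and> k<l \<and> l<length w \<and> w!j < w!k \<and> w!k < w!l \<and> w!l < w!i" by blast
next
  assume "\<exists>i j k l. i<j \<and> j<k \<and> k<l \<and> l<length w \<and> w!j < w!k \<and> w!k < w!l \<and> w!l < w!i"
  then obtain i j k l where h: "i<j" "j<k" "k<l" "l<length w" "w!j < w!k" "w!k < w!l" "w!l < w!i" by blast
  show "contains w [4,1,2,3]" unfolding contains_def
    apply (rule exI[of _ "(!) [i,j,k,l]"])
    using h by (auto simp: strict_mono_on_def less_Suc_eq)
qed




definition P :: "nat list \<Rightarrow> nat list" where "P v = 1 # map Suc v"

lemma P_nth: "0 < x \<Longrightarrow> x < Suc (length v) \<Longrightarrow> P v ! x = Suc (v!(x-1))"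
  by (cases x) (auto simp: P_def)
lemma P_nth0: "P v ! 0 = 1" by (simp add: P_def)
lemma P_len: "length (P v) = Suc (length v)" by (simp add: P_def)
lemma P_nthS: "x < length v \<Longrightarrow> P v ! Suc x = Suc (v!x)" by (simp add: P_def)

lemma P321: "contains (P v) [3,2,1] \<longleftrightarrow> contains v [3,2,1]"
proof
  assume "contains (P v) [3,2,1]"
  then obtain i j k where h: "i<j" "j<k" "k<length (P v)" "P v!j < P v!i" "P v!k < P v!j"
    unfolding c321 by blast
  have "i \<noteq> 0"
  proof
    assume "i = 0" then show False using h P_nth[of j v] P_nth0[of v] P_len[of v] by simp
  qed
  then obtain i' where i': "i = Suc i'" by (cases i) auto
  obtain j' where j': "j = Suc j'" using h by (cases j) auto
  obtain k' where k': "k = Suc k'" using h by (cases k) auto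
  have "i'<j' \<and> j'<k' \<and> k'<length v \<and> v!j' < v!i' \<and> v!k' < v!j'"
    using h unfolding i' j' k' by (simp add: P_len P_nthS)
  then show "contains v [3,2,1]" unfolding c321 by blast
next
  assume "contains v [3,2,1]"
  then obtain i j k where h: "i<j" "j<k" "k<length v" "v!j < v!i" "v!k < v!j"
    unfolding c321 by blast
  then have "Suc i<Suc j \<and> Suc j<Suc k \<and> Suc k<length (P v) \<and> P v!Suc j < P v!Suc i \<and> P v!Suc k < P v!Suc j" by (simp add: P_len P_nthS)
  then show "contains (P v) [3,2,1]" unfolding c321 by blast
qed

lemma P2143: "contains (P v) [2,1,4,3] \<longleftrightarrow> contains v [2,1,4,3]"
proof
  assume "contains (P v) [2,1,4,3]"
  then obtain i j k l where h: "i<j" "j<k" "k<l" "l<length (P v)" "P v!j < P v!i" "P v!i < P v!l" "P v!l < P v!k"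
    unfolding c2143 by blast
  have "i \<noteq> 0"
  proof
    assume "i = 0" then show False using h P_nth[of j v] P_nth0[of v] P_len[of v] by simp
  qed
  then obtain i' where i': "i = Suc i'" by (cases i) auto
  obtain j' where j': "j = Suc j'" using h by (cases j) auto
  obtain k' where k': "k = Suc k'" using h by (cases k) auto
  obtain l' where l': "l = Suc l'" using h by (cases l) auto
  have "i'<j' \<and> j'<k' \<and> k'<l' \<and> l'<length v \<and> v!j' < v!i' \<and> v!i' < v!l' \<and> v!l' < v!k'"
    using h unfolding i' j' k' l' by (simp add: P_len P_nthS)
  then show "contains v [2,1,4,3]" unfolding c2143 by blast
next
  assume "contains v [2,1,4,3]"
  then obtain i j k l where h: "i<j" "j<k" "k<l" "l<length v" "v!j < v!i" "v!i < v!l" "v!l < v!k"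
    unfolding c2143 by blast
  then have "Suc i<Suc j \<and> Suc j<Suc k \<and> Suc k < Suc l \<and> Suc l<length (P v) \<and> P v!Suc j < P v!Suc i \<and> P v!Suc i < P v!Suc l \<and> P v!Suc l < P v!Suc k" by (simp add: P_len P_nthS)
  then show "contains (P v) [2,1,4,3]" unfolding c2143 by blast
qed

lemma P4123: "contains (P v) [4,1,2,3] \<longleftrightarrow> contains v [4,1,2,3]"
proof
  assume "contains (P v) [4,1,2,3]"
  then obtain i j k l where h: "i<j" "j<k" "k<l" "l<length (P v)" "P v!j < P v!k" "P v!k < P v!l" "P v!l < P v!i"
    unfolding c4123 by blast
  have "i \<noteq> 0"
  proof
    assume "i = 0" then show False using h P_nth[of j v] P_nth[of k v] P_nth[of l v] P_nth0[of v] P_len[of v] by simp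
  qed
  then obtain i' where i': "i = Suc i'" by (cases i) auto
  obtain j' where j': "j = Suc j'" using h by (cases j) auto
  obtain k' where k': "k = Suc k'" using h by (cases k) auto
  obtain l' where l': "l = Suc l'" using h by (cases l) auto
  have "i'<j' \<and> j'<k' \<and> k'<l' \<and> l'<length v \<and> v!j' < v!k' \<and> v!k' < v!l' \<and> v!l' < v!i'"
    using h unfolding i' j' k' l' by (simp add: P_len P_nthS)
  then show "contains v [4,1,2,3]" unfolding c4123 by blast
next
  assume "contains v [4,1,2,3]"
  then obtain i j k l where h: "i<j" "j<k" "k<l" "l<length v" "v!j < v!k" "v!k < v!l" "v!l < v!i"
    unfolding c4123 by blast
  then have "Suc i<Suc j \<and> Suc j<Suc k \<and> Suc k < Suc l \<and> Suc l<length (P v) \<and> P v!Suc j < P v!Suc k \<and> P v!Suc k < P v!Suc l \<and> P v!Suc l < P v!Suc i" by (simp add: P_len P_nthS)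
  then show "contains (P v) [4,1,2,3]" unfolding c4123 by blast
qed

lemma Pfish: "fishburn (P v) \<longleftrightarrow> fishburn v"
proof
  assume f: "fishburn (P v)"
  show "fishburn v" unfolding fishburn_def
  proof
    assume "\<exists>i j. i < j \<and> j < length v \<and> Suc i < length v \<and> v ! j < v ! i \<and> v ! i < v ! Suc i \<and> v ! i = v ! j + 1"
    then obtain i j where h: "i < j" "j < length v" "Suc i < length v" "v ! j < v ! i" "v ! i < v ! Suc i" "v ! i = v ! j + 1" by blast
    then have "Suc i < Suc j \<and> Suc j < length (P v) \<and> Suc (Suc i) < length (P v) \<and> P v ! Suc j < P v ! Suc i \<and> P v ! Suc i < P v ! Suc (Suc i) \<and> P v ! Suc i = P v ! Suc j + 1"
      by (simp add: P_len P_nthS)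
    then show False using f unfolding fishburn_def by blast
  qed
next
  assume f: "fishburn v"
  show "fishburn (P v)" unfolding fishburn_def
  proof
    assume "\<exists>i j. i < j \<and> j < length (P v) \<and> Suc i < length (P v) \<and> P v ! j < P v ! i \<and> P v ! i < P v ! Suc i \<and> P v ! i = P v ! j + 1"
    then obtain i j where h: "i < j" "j < length (P v)" "Suc i < length (P v)" "P v ! j < P v ! i" "P v ! i < P v ! Suc i" "P v ! i = P v ! j + 1" by blast
    have "i \<noteq> 0"
  proof
    assume "i = 0" then show False using h P_nth[of j v] P_nth0[of v] P_len[of v] by simp
  qed
    then obtain i' where i': "i = Suc i'" by (cases i) auto
    obtain j' where j': "j = Suc j'" using h by (cases j) auto
    have "i' < j' \<and> j' < length v \<and> Suc i' < length v \<and> v ! j' < v ! i' \<and> v ! i' < v ! Suc i' \<and> v ! i' = v ! j' + 1"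
      using h unfolding i' j' by (simp add: P_len P_nthS)
    then show False using f unfolding fishburn_def by blast
  qed
qed

lemma P_perm: "v \<in> perms_of n \<longleftrightarrow> P v \<in> perms_of (Suc n)"
proof -
  have a1: "distinct (P v) \<Longrightarrow> distinct v"
    by (auto simp: P_def distinct_map)
  have a2: "distinct v \<Longrightarrow> set v = {1..n} \<Longrightarrow> distinct (P v)"
    by (auto simp: P_def distinct_map)
  have b: "distinct (P v) \<Longrightarrow> set (P v) = {1..Suc n} \<longleftrightarrow> set v = {1..n}"
  proof
    assume d: "distinct (P v)" and s: "set (P v) = {1..Suc n}"
    have z: "0 \<notin> set v" using d by (auto simp: P_def)
    have "set (P v) = insert 1 (Suc ` set v)" by (simp add: P_def)
    show "set v = {1..n}"
    proof (rule set_eqI)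
      fix x
      have "x \<noteq> 0 \<Longrightarrow> Suc x \<in> set (P v) \<longleftrightarrow> x \<in> set v" by (auto simp: P_def)
      then show "x \<in> set v \<longleftrightarrow> x \<in> {1..n}" using s z by (cases x) auto
    qed
  next
    assume "distinct (P v)" and s: "set v = {1..n}"
    show "set (P v) = {1..Suc n}"
    proof (rule set_eqI)
      fix x
      show "x \<in> set (P v) \<longleftrightarrow> x \<in> {1..Suc n}" using s
        by (cases x) (auto simp: P_def image_iff)
    qed
  qed
  show ?thesis unfolding perms_of_def mem_Collect_eq using a1 a2 b by blast
qed

lemma P_inj: "inj P" by (auto simp: inj_def P_def inj_map_eq_map)

lemma P_surj: assumes "w \<in> perms_of (Suc n)" "hd w = 1" shows "w = P (map (\<lambda>x. x - 1) (tl w))"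
proof -
  have "w \<noteq> []" using assms by (auto simp: perms_of_def)
  then have w: "w = 1 # tl w" using assms(2) by (cases w) auto
  have st: "set (tl w) \<subseteq> set w" by (cases w) auto
  have z: "0 \<notin> set (tl w)" using assms(1) st by (auto simp: perms_of_def)
  have "map (\<lambda>x. Suc (x - 1)) (tl w) = tl w"
    by (rule map_idI) (metis z Suc_pred' not_gr_zero)
  then have "map Suc (map (\<lambda>x. x - 1) (tl w)) = tl w" by (simp add: comp_def)
  then show ?thesis using w by (simp add: P_def)
qed




definition A :: "nat \<Rightarrow> nat list" where "A n = 2 # 1 # [3..<n+2]"
definition B :: "nat \<Rightarrow> nat \<Rightarrow> nat list" where
  "B n t = 3 # 1 # take t [4..<n+2] @ 2 # drop t [4..<n+2]"

lemma A_len: "length (A n) = n + 1" if "n \<ge> 1" using that by (simp add: A_def del: upt_Suc)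
lemma B_len: "length (B n t) = n + 1" if "n \<ge> 2" using that by (simp add: B_def del: upt_Suc)

lemma A_nth: assumes "k < n+1" shows "A n ! k = (if k=0 then 2 else if k=1 then 1 else k+1)"
proof -
  consider "k = 0" | "k = 1" | "k \<ge> 2" by linarith
  then show ?thesis
  proof cases
    case 3
    then obtain m where m: "k = m + 2" by (metis add.commute le_iff_add)
    have "A n ! k = [3..<n+2] ! m" by (simp add: A_def m del: upt_Suc)
    also have "\<dots> = m + 3" using assms m by (simp del: upt_Suc)
    finally show ?thesis using m by auto
  qed (auto simp: A_def del: upt_Suc)
qed

lemma B_nth: assumes "t < n - 1" "k < n+1"
  shows "B n t ! k = (if k=0 then 3 else if k=1 then 1 else if k < t+2 then k+2 else if k = t+2 then 2 else k+1)"
proof -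
  consider "k = 0" | "k = 1" | "k \<ge> 2" by linarith
  then show ?thesis
  proof cases
    case 3
    then obtain m where m: "k = m + 2" by (metis add.commute le_iff_add)
    have "B n t ! k = (take t [4..<n+2] @ 2 # drop t [4..<n+2]) ! m" by (simp add: B_def m del: upt_Suc)
    also have "\<dots> = (if m < t then m+4 else if m = t then 2 else m+3)"
    proof -
      define xs where "xs = [4..<n+2]"
      have lx: "length xs = n - 2" by (simp add: xs_def del: upt_Suc)
      have tl: "length (take t xs) = t" using lx assms by simp
      have xn: "\<And>i. i < n - 2 \<Longrightarrow> xs ! i = i + 4" by (simp add: xs_def del: upt_Suc)
      have "m < n - 1" using assms m by simp
      have "(take t xs @ 2 # drop t xs) ! m = (if m < t then m+4 else if m = t then 2 else m+3)"
      proof (cases "m < t")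
        case True then show ?thesis using tl xn assms by (simp add: nth_append del: upt_Suc)
      next
        case False
        then have "(take t xs @ 2 # drop t xs) ! m = (2 # drop t xs) ! (m - t)" using tl by (simp add: nth_append)
        moreover have "m > t \<Longrightarrow> (2 # drop t xs) ! (m - t) = xs ! (m - 1)"
          using lx \<open>m < n - 1\<close> by (simp add: nth_Cons')
        moreover have "m > t \<Longrightarrow> xs ! (m - 1) = m + 3" using xn \<open>m < n - 1\<close> False by simp
        ultimately show ?thesis using False by (cases "m = t") auto
      qed
      then show ?thesis by (simp add: xs_def del: upt_Suc)
    qed
    finally show ?thesis using m by auto
  qed (auto simp: B_def del: upt_Suc)
qed




lemma A_fish: assumes "n \<ge> 1" shows "fishburn (A n)"
  unfolding fishburn_def
proof
  assume "\<exists>i j. i < j \<and> j < length (A n) \<and> Suc i < length (A n) \<and> A n ! j < A n ! i \<and> A n ! i < A n ! Suc i \<and> A n ! i = A n ! j + 1"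
  then obtain i j where h: "i < j" "j < n+1" "Suc i < n+1" "A n ! j < A n ! i" "A n ! i < A n ! Suc i" "A n ! i = A n ! j + 1"
    using A_len[OF assms] by auto
  have b: "i < n+1" "j < n+1" "Suc i < n+1" using h by auto
  show False using h A_nth[OF b(1)] A_nth[OF b(2)] A_nth[OF b(3)] by (auto split: if_splits)
qed

lemma A_321: assumes "n \<ge> 1" shows "\<not> contains (A n) [3,2,1]"
  unfolding c321
proof
  assume "\<exists>i j k. i < j \<and> j < k \<and> k < length (A n) \<and> A n ! j < A n ! i \<and> A n ! k < A n ! j"
  then obtain i j k where h: "i < j" "j < k" "k < n+1" "A n ! j < A n ! i" "A n ! k < A n ! j"
    using A_len[OF assms] by auto
  have b: "i < n+1" "j < n+1" "k < n+1" using h by auto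
  show False using h A_nth[OF b(1)] A_nth[OF b(2)] A_nth[OF b(3)] by (auto split: if_splits)
qed

lemma A_2143: assumes "n \<ge> 1" shows "\<not> contains (A n) [2,1,4,3]"
  unfolding c2143
proof
  assume "\<exists>i j k l. i<j \<and> j<k \<and> k<l \<and> l<length (A n) \<and> A n!j < A n!i \<and> A n!i < A n!l \<and> A n!l < A n!k"
  then obtain i j k l where h: "i<j" "j<k" "k<l" "l<n+1" "A n!j < A n!i" "A n!i < A n!l" "A n!l < A n!k"
    using A_len[OF assms] by auto
  have b: "i < n+1" "j < n+1" "k < n+1" "l < n+1" using h by auto
  show False using h A_nth[OF b(1)] A_nth[OF b(2)] A_nth[OF b(3)] A_nth[OF b(4)] by (auto split: if_splits)
qed

lemma A_4123: assumes "n \<ge> 1" shows "\<not> contains (A n) [4,1,2,3]"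
  unfolding c4123
proof
  assume "\<exists>i j k l. i<j \<and> j<k \<and> k<l \<and> l<length (A n) \<and> A n!j < A n!k \<and> A n!k < A n!l \<and> A n!l < A n!i"
  then obtain i j k l where h: "i<j" "j<k" "k<l" "l<n+1" "A n!j < A n!k" "A n!k < A n!l" "A n!l < A n!i"
    using A_len[OF assms] by auto
  have b: "i < n+1" "j < n+1" "k < n+1" "l < n+1" using h by auto
  show False using h A_nth[OF b(1)] A_nth[OF b(2)] A_nth[OF b(3)] A_nth[OF b(4)] by (auto split: if_splits)
qed

lemma B_fish: assumes "n \<ge> 2" "t < n - 1" shows "fishburn (B n t)"
  unfolding fishburn_def
proof
  assume "\<exists>i j. i < j \<and> j < length (B n t) \<and> Suc i < length (B n t) \<and> B n t ! j < B n t ! i \<and> B n t ! i < B n t ! Suc i \<and> B n t ! i = B n t ! j + 1"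
  then obtain i j where h: "i < j" "j < n+1" "Suc i < n+1" "B n t ! j < B n t ! i" "B n t ! i < B n t ! Suc i" "B n t ! i = B n t ! j + 1"
    using B_len[OF assms(1)] by auto
  have b: "i < n+1" "j < n+1" "Suc i < n+1" using h by auto
  show False using h B_nth[OF assms(2) b(1)] B_nth[OF assms(2) b(2)] B_nth[OF assms(2) b(3)] by (auto split: if_splits)
qed

lemma B_321: assumes "n \<ge> 2" "t < n - 1" shows "\<not> contains (B n t) [3,2,1]"
  unfolding c321
proof
  assume "\<exists>i j k. i < j \<and> j < k \<and> k < length (B n t) \<and> B n t ! j < B n t ! i \<and> B n t ! k < B n t ! j"
  then obtain i j k where h: "i < j" "j < k" "k < n+1" "B n t ! j < B n t ! i" "B n t ! k < B n t ! j"
    using B_len[OF assms(1)] by auto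
  have b: "i < n+1" "j < n+1" "k < n+1" using h by auto
  show False using h B_nth[OF assms(2) b(1)] B_nth[OF assms(2) b(2)] B_nth[OF assms(2) b(3)] by (auto split: if_splits)
qed

lemma B_2143: assumes "n \<ge> 2" "t < n - 1" shows "\<not> contains (B n t) [2,1,4,3]"
  unfolding c2143
proof
  assume "\<exists>i j k l. i<j \<and> j<k \<and> k<l \<and> l<length (B n t) \<and> B n t!j < B n t!i \<and> B n t!i < B n t!l \<and> B n t!l < B n t!k"
  then obtain i j k l where h: "i<j" "j<k" "k<l" "l<n+1" "B n t!j < B n t!i" "B n t!i < B n t!l" "B n t!l < B n t!k"
    using B_len[OF assms(1)] by auto
  have b: "i < n+1" "j < n+1" "k < n+1" "l < n+1" using h by auto
  show False using h B_nth[OF assms(2) b(1)] B_nth[OF assms(2) b(2)] B_nth[OF assms(2) b(3)] B_nth[OF assms(2) b(4)] by (auto split: if_splits)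
qed

lemma B_4123: assumes "n \<ge> 2" "t < n - 1" shows "\<not> contains (B n t) [4,1,2,3]"
  unfolding c4123
proof
  assume "\<exists>i j k l. i<j \<and> j<k \<and> k<l \<and> l<length (B n t) \<and> B n t!j < B n t!k \<and> B n t!k < B n t!l \<and> B n t!l < B n t!i"
  then obtain i j k l where h: "i<j" "j<k" "k<l" "l<n+1" "B n t!j < B n t!k" "B n t!k < B n t!l" "B n t!l < B n t!i"
    using B_len[OF assms(1)] by auto
  have b: "i < n+1" "j < n+1" "k < n+1" "l < n+1" using h by auto
  show False using h B_nth[OF assms(2) b(1)] B_nth[OF assms(2) b(2)] B_nth[OF assms(2) b(3)] B_nth[OF assms(2) b(4)] by (auto split: if_splits)
qed




lemma perm_from: assumes "length w = n" "distinct w" "\<And>k. k < n \<Longrightarrow> 1 \<le> w!k \<and> w!k \<le> n"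
  shows "w \<in> perms_of n"
proof -
  have s: "set w \<subseteq> {1..n}" using assms by (auto simp: in_set_conv_nth)
  have "card (set w) = card {1..n}" using assms distinct_card by fastforce
  then have "set w = {1..n}" using card_subset_eq[OF _ s] by simp
  then show ?thesis using assms by (simp add: perms_of_def)
qed

lemma A_perm: assumes "n \<ge> 1" shows "A n \<in> perms_of (Suc n)"
proof (rule perm_from)
  show "length (A n) = Suc n" using A_len[OF assms] by simp
  show "distinct (A n)" unfolding distinct_conv_nth A_len[OF assms]
    using A_nth by (auto split: if_splits)
  show "\<And>k. k < Suc n \<Longrightarrow> 1 \<le> A n ! k \<and> A n ! k \<le> Suc n"
    using A_nth assms by auto
qed

lemma B_perm: assumes "n \<ge> 2" "t < n - 1" shows "B n t \<in> perms_of (Suc n)"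
proof (rule perm_from)
  show "length (B n t) = Suc n" using B_len[OF assms(1)] by simp
  show "distinct (B n t)" unfolding distinct_conv_nth B_len[OF assms(1)]
    using B_nth[OF assms(2)] by (auto split: if_splits)
  show "\<And>k. k < Suc n \<Longrightarrow> 1 \<le> B n t ! k \<and> B n t ! k \<le> Suc n"
    using B_nth[OF assms(2)] assms by auto
qed

definition E :: "nat \<Rightarrow> nat list set" where
  "E n = (if n = 0 then {} else insert (A n) (B n ` {..<n-1}))"

lemma E_card: "card (E n) = n"
proof (cases "n = 0")
  case True then show ?thesis by (simp add: E_def)
next
  case False
  have inj: "inj_on (B n) {..<n-1}"
  proof (rule inj_onI)
    fix t t' assume t: "t \<in> {..<n-1}" "t' \<in> {..<n-1}" "B n t = B n t'"
    have "B n t ! (t+2) = 2" using B_nth[of t n "t+2"] t by auto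
    moreover have "B n t' ! (t+2) = 2" using t by (metis calculation)
    moreover have "t + 2 < n + 1" using t by auto
    ultimately show "t = t'" using B_nth[of t' n "t+2"] t by (auto split: if_splits)
  qed
  have "A n \<notin> B n ` {..<n-1}"
  proof
    assume "A n \<in> B n ` {..<n-1}"
    then obtain t where "t < n - 1" "A n = B n t" by auto
    then show False by (simp add: A_def B_def)
  qed
  then show ?thesis using False inj by (simp add: E_def card_image)
qed

lemma E_sub: "E n \<subseteq> {w \<in> F (Suc n) [[3,2,1],[2,1,4,3],[4,1,2,3]]. hd w \<noteq> 1}"
proof
  fix w assume "w \<in> E n"
  then have "n \<ge> 1 \<and> w = A n \<or> (\<exists>t. n \<ge> 2 \<and> t < n - 1 \<and> w = B n t)"
    by (auto simp: E_def split: if_splits)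
  then show "w \<in> {w \<in> F (Suc n) [[3,2,1],[2,1,4,3],[4,1,2,3]]. hd w \<noteq> 1}"
  proof
    assume h: "n \<ge> 1 \<and> w = A n"
    then show ?thesis using A_perm A_fish A_321 A_2143 A_4123
      by (auto simp: F_def avoids_def A_def)
  next
    assume "\<exists>t. n \<ge> 2 \<and> t < n - 1 \<and> w = B n t"
    then obtain t where h: "n \<ge> 2" "t < n - 1" "w = B n t" by blast
    then show ?thesis using B_perm[OF h(1,2)] B_fish[OF h(1,2)] B_321[OF h(1,2)] B_2143[OF h(1,2)] B_4123[OF h(1,2)]
      by (auto simp: F_def avoids_def B_def)
  qed
qed




lemma set_upt2: "set [k..<n+2] = {k..Suc n}" by (simp del: upt_Suc) auto

lemma decomp2: "length w \<ge> 2 \<Longrightarrow> w = w!0 # w!1 # drop 2 w"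
  by (cases w; cases "tl w") auto

lemma struct:
  assumes w: "w \<in> F (Suc n) [[3,2,1],[2,1,4,3],[4,1,2,3]]" and hd: "hd w \<noteq> 1"
  shows "w \<in> E n"
proof -
  have d: "distinct w" and s: "set w = {1..Suc n}" and fi: "fishburn w"
    and n321: "\<not> contains w [3,2,1]" and n2143: "\<not> contains w [2,1,4,3]" and n4123: "\<not> contains w [4,1,2,3]"
    using w by (auto simp: F_def perms_of_def avoids_def)
  have len: "length w = Suc n" using distinct_card[OF d] s by simp
  have nth_in: "w!k \<in> {1..Suc n}" if "k < Suc n" for k
  proof -
    have "w!k \<in> set w" using that len by simp
    then show ?thesis using s by simp
  qed
  have pos: "\<exists>k<Suc n. w!k = x" if "x \<in> {1..Suc n}" for x
  proof -
    have "x \<in> set w" using that s by simp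
    then obtain k where "k < length w" "w!k = x" by (auto simp: in_set_conv_nth)
    then show ?thesis using len by auto
  qed
  have inj: "\<And>i j. i<Suc n \<Longrightarrow> j<Suc n \<Longrightarrow> w!i = w!j \<Longrightarrow> i = j" using d len by (simp add: nth_eq_iff_index_eq)
  have h0: "hd w = w!0" using len by (cases w) auto
  define a where "a = w!0"
  have a1: "a \<noteq> 1" using hd h0 a_def by simp
  have a_rng: "a \<in> {1..Suc n}" using nth_in[of 0] a_def by simp
  have C321: "\<And>i j k. i<j \<Longrightarrow> j<k \<Longrightarrow> k<Suc n \<Longrightarrow> w!j < w!i \<Longrightarrow> w!k < w!j \<Longrightarrow> False"
    using n321 unfolding c321 len by blast
  have C2143: "\<And>i j k l. i<j \<Longrightarrow> j<k \<Longrightarrow> k<l \<Longrightarrow> l<Suc n \<Longrightarrow> w!j < w!i \<Longrightarrow> w!i < w!l \<Longrightarrow> w!l < w!k \<Longrightarrow> False"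
    using n2143 unfolding c2143 len by blast
  have C4123: "\<And>i j k l. i<j \<Longrightarrow> j<k \<Longrightarrow> k<l \<Longrightarrow> l<Suc n \<Longrightarrow> w!j < w!k \<Longrightarrow> w!k < w!l \<Longrightarrow> w!l < w!i \<Longrightarrow> False"
    using n4123 unfolding c4123 len by blast
  have FI: "\<And>j. 0 < j \<Longrightarrow> j < Suc n \<Longrightarrow> 1 < Suc n \<Longrightarrow> w!j < w!0 \<Longrightarrow> w!0 = w!j+1 \<Longrightarrow> w!0 < w!1 \<Longrightarrow> False"
  proof -
    fix j assume h: "0 < j" "j < Suc n" "1 < Suc n" "w!j < w!0" "w!0 = w!j+1" "w!0 < w!1"
    have "\<exists>i j. i < j \<and> j < length w \<and> Suc i < length w \<and> w ! j < w ! i \<and> w ! i < w ! Suc i \<and> w ! i = w ! j + 1"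
      using h len by (intro exI[of _ 0] exI[of _ j]) simp
    then show False using fi unfolding fishburn_def by blast
  qed
  obtain p1 where p1: "p1 < Suc n" "w!p1 = 1" using pos[of 1] by auto
  have p10: "p1 \<noteq> 0" using p1 a1 a_def by (cases p1) auto
  have a_le3: "a \<le> 3"
  proof (rule ccontr)
    assume a3: "\<not> a \<le> 3"
    obtain p2 where p2: "p2 < Suc n" "w!p2 = 2" using pos[of 2] a_rng a3 by auto
    obtain p3 where p3: "p3 < Suc n" "w!p3 = 3" using pos[of 3] a_rng a3 by auto
    have "p2 \<noteq> 0" using p2 a3 a_def by (cases p2) auto
    have "p3 \<noteq> 0" using p3 a3 a_def by (cases p3) auto
    have "p1 \<noteq> p2" "p2 \<noteq> p3" using p1 p2 p3 by auto
    have "p1 < p2"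
    proof (rule ccontr)
      assume "\<not> p1 < p2"
      then have "p2 < p1" using \<open>p1 \<noteq> p2\<close> by simp
      then show False using C321[of 0 p2 p1] p1 p2 \<open>p2 \<noteq> 0\<close> a3 a_def by auto
    qed
    have "p2 < p3"
    proof (rule ccontr)
      assume "\<not> p2 < p3"
      then have "p3 < p2" using \<open>p2 \<noteq> p3\<close> by simp
      then show False using C321[of 0 p3 p2] p3 p2 \<open>p3 \<noteq> 0\<close> a3 a_def by auto
    qed
    then show False using C4123[of 0 p1 p2 p3] \<open>p1 < p2\<close> p1 p2 p3 p10 a3 a_def by auto
  qed
  then consider "a = 2" | "a = 3" using a1 a_rng by force
  then show ?thesis
  proof cases
    case 1
    have n1: "n \<ge> 1" using a_rng 1 by auto
    have w1: "w!1 = 1"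
    proof -
      have "\<not> w!0 < w!1" using FI[of p1] p1 p10 n1 1 a_def by auto
      moreover have "w!1 \<noteq> w!0" using inj[of 1 0] n1 by auto
      moreover have "w!1 \<ge> 1" using nth_in[of 1] n1 by auto
      ultimately show ?thesis using 1 a_def by auto
    qed
    define r where "r = drop 2 w"
    have wd0: "w = w!0 # w!1 # drop 2 w" using len n1 by (intro decomp2) simp
    have wd: "w = 2 # 1 # r" using wd0 unfolding w1 a_def[symmetric] 1 r_def[symmetric] .
    have rn: "\<And>i. i < length r \<Longrightarrow> r!i = w!(2+i)" by (simp add: r_def)
    have lr: "length r = n - 1" using len by (simp add: r_def)
    have sr: "sorted_wrt (<) r"
      unfolding sorted_wrt_iff_nth_less
    proof (intro allI impI)
      fix i j assume ij: "i < j" "j < length r"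
      have b: "2+i < Suc n" "2+j < Suc n" using ij lr by auto
      have "w!(2+j) \<noteq> w!0" "w!(2+j) \<noteq> w!1" "w!(2+i) \<noteq> w!(2+j)"
        using inj[OF b(2), of 0] inj[OF b(2), of 1] inj[OF b(1) b(2)] ij n1 by auto
      moreover have "w!(2+j) \<ge> 1" using nth_in[OF b(2)] by auto
      ultimately have ne: "w!(2+i) \<noteq> w!(2+j)" and g2: "w!0 < w!(2+j)" using w1 1 a_def by auto
      have g1: "w!1 < w!0" using w1 1 a_def by simp
      have "w!(2+i) < w!(2+j)"
      proof (rule ccontr)
        assume "\<not> w!(2+i) < w!(2+j)"
        then have "w!(2+j) < w!(2+i)" using ne by linarith
        then show False using C2143[OF _ _ _ b(2) g1 g2] ij by auto
      qed
      then show "r!i < r!j" using rn ij by auto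
    qed
    have sw: "set w = insert 2 (insert 1 (set r))" by (subst wd) simp
    have dw: "distinct (2 # 1 # r)" using d by (subst (asm) wd)
    have e: "insert 2 (insert 1 (set r)) = {1..Suc n}" "1 \<notin> set r" "2 \<notin> set r"
      using s sw dw by auto
    have "set r = insert 2 (insert 1 (set r)) - {1,2}" using e(2,3) by auto
    also have "\<dots> = {1..Suc n} - {1,2}" using e(1) by simp
    finally have "set r = {1..Suc n} - {1,2}" .
    also have "\<dots> = {3..Suc n}" by auto
    finally have "set r = {3..Suc n}" .
    then have "set r = set [3..<n+2]" unfolding set_upt2 .
    then have "r = [3..<n+2]" using strict_sorted_equal[OF sorted_wrt_upt sr] by blast
    then have "w = A n" using wd by (simp add: A_def del: upt_Suc)
    then show ?thesis using n1 by (simp add: E_def)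
  next
    case 2
    have n2: "n \<ge> 2" using a_rng 2 by auto
    obtain p2 where p2: "p2 < Suc n" "w!p2 = 2" using pos[of 2] n2 by auto
    have p20: "p2 \<noteq> 0" using p2 2 a_def by (cases p2) auto
    have "p1 \<noteq> p2" using p1 p2 by auto
    have p12: "p1 < p2"
    proof (rule ccontr)
      assume "\<not> p1 < p2"
      then have "p2 < p1" using \<open>p1 \<noteq> p2\<close> by simp
      then show False using C321[of 0 p2 p1] p1 p2 p20 2 a_def by auto
    qed
    have w1: "w!1 = 1"
    proof -
      have "\<not> w!0 < w!1" using FI[of p2] p2 p20 n2 2 a_def by auto
      moreover have "w!1 \<noteq> w!0" using inj[of 1 0] n2 by auto
      moreover have "w!1 \<ge> 1" using nth_in[of 1] n2 by auto
      moreover have "w!1 \<noteq> 2"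
      proof
        assume "w!1 = 2" then have "p2 = 1" using inj[of p2 1] p2 n2 by auto
        then show False using p12 p10 by auto
      qed
      ultimately show ?thesis using 2 a_def by auto
    qed
    define t where "t = p2 - 2"
    have p2ge: "p2 \<ge> 2" using p12 p10 by auto
    have tl: "t < n - 1" using p2 p2ge t_def by auto
    define r where "r = drop 2 w"
    have wd0: "w = w!0 # w!1 # drop 2 w" using len n2 by (intro decomp2) simp
    have wd: "w = 3 # 1 # r" using wd0 unfolding w1 a_def[symmetric] 2 r_def[symmetric] .
    have rn: "\<And>i. i < length r \<Longrightarrow> r!i = w!(2+i)" by (simp add: r_def)
    have lr: "length r = n - 1" using len by (simp add: r_def)
    have tp: "2 + t = p2" using p2ge t_def by simp
    have "r!t = w!(2+t)" using rn[of t] lr tl by simp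
    then have rt: "r!t = 2" using tp p2 by simp
    have sR: "sorted_wrt (\<lambda>x y. x \<noteq> 2 \<longrightarrow> y \<noteq> 2 \<longrightarrow> x < y) r"
      unfolding sorted_wrt_iff_nth_less
    proof (intro allI impI)
      fix i j assume ij: "i < j" "j < length r" "r!i \<noteq> 2" "r!j \<noteq> 2"
      have b: "2+i < Suc n" "2+j < Suc n" using ij lr by auto
      have "w!(2+j) \<noteq> w!0" "w!(2+j) \<noteq> w!1" "w!(2+i) \<noteq> w!(2+j)"
        using inj[OF b(2), of 0] inj[OF b(2), of 1] inj[OF b(1) b(2)] ij n2 by auto
      moreover have "w!(2+j) \<ge> 1" using nth_in[OF b(2)] by auto
      moreover have "w!(2+j) \<noteq> 2" using ij rn by auto
      ultimately have ne: "w!(2+i) \<noteq> w!(2+j)" and g2: "w!0 < w!(2+j)" using w1 2 a_def by auto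
      have g1: "w!1 < w!0" using w1 2 a_def by simp
      have "w!(2+i) < w!(2+j)"
      proof (rule ccontr)
        assume "\<not> w!(2+i) < w!(2+j)"
        then have "w!(2+j) < w!(2+i)" using ne by linarith
        then show False using C2143[OF _ _ _ b(2) g1 g2] ij by auto
      qed
      then show "r!i < r!j" using rn ij by auto
    qed
    have sf: "sorted_wrt (<) (filter (\<lambda>x. x \<noteq> 2) r)"
      by (rule sorted_wrt_mono_rel[OF _ sorted_wrt_filter[OF sR]]) auto
    have sw: "set w = insert 3 (insert 1 (set r))" by (subst wd) simp
    have dw: "distinct (3 # 1 # r)" using d by (subst (asm) wd)
    have e: "insert 3 (insert 1 (set r)) = {1..Suc n}" "1 \<notin> set r" "3 \<notin> set r"
      using s sw dw by auto
    have "set r - {2} = insert 3 (insert 1 (set r)) - {1,2,3}" using e(2,3) by auto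
    also have "\<dots> = {1..Suc n} - {1,2,3}" using e(1) by simp
    finally have "set r - {2} = {1..Suc n} - {1,2,3}" .
    also have "\<dots> = {4..Suc n}" by auto
    finally have "set r - {2} = {4..Suc n}" .
    then have "set (filter (\<lambda>x. x \<noteq> 2) r) = set [4..<n+2]" unfolding set_upt2 by auto
    then have fr: "filter (\<lambda>x. x \<noteq> 2) r = [4..<n+2]" using strict_sorted_equal[OF sorted_wrt_upt sf] by blast
    have rdec0: "r = take t r @ r ! t # drop (Suc t) r" using lr tl by (intro id_take_nth_drop) simp
    have rdec: "r = take t r @ 2 # drop (Suc t) r" using rdec0 unfolding rt .
    have dr: "distinct r" using d wd by (simp del: upt_Suc)
    then have "distinct (take t r @ 2 # drop (Suc t) r)" by (subst (asm) rdec)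
    then have n2a: "2 \<notin> set (take t r)" and n2b: "2 \<notin> set (drop (Suc t) r)" by auto
    have f1: "filter (\<lambda>x. x \<noteq> 2) (take t r) = take t r" by (rule filter_True) (use n2a in auto)
    have f2: "filter (\<lambda>x. x \<noteq> 2) (drop (Suc t) r) = drop (Suc t) r" by (rule filter_True) (use n2b in auto)
    have "filter (\<lambda>x. x \<noteq> 2) r = filter (\<lambda>x. x \<noteq> 2) (take t r @ 2 # drop (Suc t) r)"
      by (rule arg_cong[OF rdec])
    also have "\<dots> = take t r @ drop (Suc t) r" using f1 f2 by (simp del: upt_Suc)
    finally have "filter (\<lambda>x. x \<noteq> 2) r = take t r @ drop (Suc t) r" .
    then have eq: "[4..<n+2] = take t r @ drop (Suc t) r" using fr by (simp del: upt_Suc)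
    have ltr: "length (take t r) = t" using lr tl by (simp del: upt_Suc)
    have "take t [4..<n+2] = take t r" unfolding eq using ltr by (simp del: upt_Suc)
    moreover have "drop t [4..<n+2] = drop (Suc t) r" unfolding eq using ltr by (simp del: upt_Suc)
    ultimately have "w = B n t" unfolding B_def by (subst wd, subst rdec) (simp del: upt_Suc)
    then show ?thesis using n2 tl by (simp add: E_def del: upt_Suc)
  qed
qed




abbreviation "PS \<equiv> [[3,2,1],[2,1,4,3],[4,1,2,3::nat]]"

lemma F_iff: "w \<in> F n PS \<longleftrightarrow> w \<in> perms_of n \<and> fishburn w \<and> \<not> contains w [3,2,1] \<and> \<not> contains w [2,1,4,3] \<and> \<not> contains w [4,1,2,3]"
  by (simp add: F_def avoids_def)

lemma perms_finite: "finite (perms_of n)"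
proof (rule finite_subset)
  show "perms_of n \<subseteq> {xs. set xs \<subseteq> {1..n} \<and> length xs = card {1..n}}"
    by (auto simp: perms_of_def distinct_card[symmetric])
  show "finite {xs. set xs \<subseteq> {1..n} \<and> length xs = card {1..n}}"
    by (rule finite_lists_length_eq) simp
qed

lemma F_finite: "finite (F n ps)"
  by (rule finite_subset[OF _ perms_finite[of n]]) (auto simp: F_def)

lemma F0: "F 0 PS = {[]}"
proof -
  have "perms_of 0 = {[]}" by (auto simp: perms_of_def)
  moreover have "fishburn []" by (simp add: fishburn_def)
  moreover have "\<not> contains [] p" if "p \<noteq> []" for p :: "nat list"
    using that by (auto simp: contains_def)
  ultimately show ?thesis by (auto simp: F_def avoids_def)
qed

lemma F_Suc: "F (Suc n) PS = P ` F n PS \<union> E n"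
proof
  show "F (Suc n) PS \<subseteq> P ` F n PS \<union> E n"
  proof
    fix w assume w: "w \<in> F (Suc n) PS"
    show "w \<in> P ` F n PS \<union> E n"
    proof (cases "hd w = 1")
      case True
      define v where "v = map (\<lambda>x. x - 1) (tl w)"
      have "w \<in> perms_of (Suc n)" using w unfolding F_iff by blast
      then have wv: "w = P v" using P_surj[of w n] True unfolding v_def by blast
      have "v \<in> F n PS" using w unfolding F_iff wv
        using P_perm[of v n] Pfish[of v] P321[of v] P2143[of v] P4123[of v] by simp
      then show ?thesis using wv by blast
    next
      case False
      then show ?thesis using struct[OF w] by blast
    qed
  qed
next
  show "P ` F n PS \<union> E n \<subseteq> F (Suc n) PS"
  proof
    fix w assume "w \<in> P ` F n PS \<union> E n"
    then show "w \<in> F (Suc n) PS"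
    proof
      assume "w \<in> P ` F n PS"
      then obtain v where v: "v \<in> F n PS" "w = P v" by blast
      then show ?thesis unfolding F_iff
        using P_perm[of v n] Pfish[of v] P321[of v] P2143[of v] P4123[of v] by simp
    next
      assume "w \<in> E n" then show ?thesis using E_sub by blast
    qed
  qed
qed

lemma disj: "P ` F n PS \<inter> E n = {}"
proof -
  have "E n \<subseteq> {w. hd w \<noteq> 1}" using E_sub by blast
  moreover have "P ` F n PS \<subseteq> {w. hd w = 1}" by (auto simp: P_def)
  ultimately show ?thesis by blast
qed

lemma E_fin: "finite (E n)" by (simp add: E_def)

theorem card_F: "card (F n PS) = (n choose 2) + 1"
proof (induction n)
  case 0 show ?case unfolding F0 by simp
next
  case (Suc n)
  have "card (F (Suc n) PS) = card (P ` F n PS) + card (E n)"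
    unfolding F_Suc by (rule card_Un_disjoint) (use disj E_fin F_finite in auto)
  also have "\<dots> = card (F n PS) + n" using P_inj E_card by (simp add: card_image inj_on_subset)
  also have "\<dots> = (Suc n choose 2) + 1" using Suc by (simp add: numeral_2_eq_2)
  finally show ?case .
qed


theorem mainTheorem12:
  fixes n :: nat
  shows "card (F n [[3,2,1],[2,1,4,3],[4,1,2,3]]) = (n choose 2) + 1"
  using card_F[of n] by simp

end
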